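(* Let $k\geq 2$ and $\ell\geq 3k+2$ be fixed integers. Let $G\in\mathcal{G}_{k,n,p}$ and $v,w,w'\in V(G)$. Then \[ \left|H_{\mu_{\ell,w} v}-H_{\mu_{\ell,w'} v}\right|\lesssim\frac{\sqrt{\log n}}{\sqrt{pn}}. \]
   Context: Let $p=p(n)$ satisfy $\frac{\log n}{n^{(k-1)/k}}\le p\le 1-\Omega(\frac{\log^4 n}{n})$. $\mathcal{G}_{k,n,p}$ denotes the set of graphs $G$ on $n$ vertices satisfying: (i) $G$ is not bipartite; (ii) $\operatorname{diam}(G)\le k$; (iii) every vertex has degree $d(v)=pn\pm\mathcal{O}(\sqrt{pn\log n})$; (iv) $2|E(G)|=pn^2\pm\mathcal{O}(\sqrt{pn^2\log n})$; (v) $|N(v)\cap N(w)|=p^2n\pm\mathcal{O}(\max\{\sqrt{p^2n\log n},\log n\})$ for all $v\ne w$; (vi) the unit eigenvector $\phi$ of the largest adjacency eigenvalue has entries $\phi_i=\frac1{\sqrt n}\pm\mathcal{O}(\frac{\log^{3/2}n}{\sqrt p\,n\log(pn)})$; (vii) $\lambda_1=(1+o(1))pn$; (viii) $\max\{|\lambda_2|,|\lambda_n|\}=\mathcal{O}(\sqrt{pn})$, where $\lambda_1\ge\dots\ge\lambda_n$ are the adjacency eigenvalues. Asymptotic notation is as $n\to\infty$ with constants independent of $n$; $f\lesssim g$ means $f=\mathcal{O}(g)$. For a simple random walk $X$ on $G$ with $X_0=w$, $\mu_{\ell,w}(x)=\mathbb{P}[X_\ell=x\mid X_0=w]$. $H_{uv}$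 is the expected first hitting time of $v$ from $u$ (with $H_{vv}=0$), and for a probability distribution $\delta$ on $V(G)$, $H_{\delta v}=\sum_u\delta(u)H_{uv}$. *)

theory Defs
  imports Complex_Main
begin

definition simple_graph :: "nat \<Rightarrow> (nat \<Rightarrow> nat \<Rightarrow> bool) \<Rightarrow> bool" where
  "simple_graph n E \<longleftrightarrow> (\<forall>x y. E x y \<longrightarrow> x < n \<and> y < n \<and> x \<noteq> y \<and> E y x)"

definition adj :: "(nat \<Rightarrow> nat \<Rightarrow> bool) \<Rightarrow> nat \<Rightarrow> nat \<Rightarrow> real" where
  "adj E x y = (if E x y then 1 else 0)"

definition deg :: "nat \<Rightarrow> (nat \<Rightarrow> nat \<Rightarrow> bool) \<Rightarrow> nat \<Rightarrow> nat" where
  "deg n E v = card {u. u < n \<and> E v u}"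

definition num_edges :: "nat \<Rightarrow> (nat \<Rightarrow> nat \<Rightarrow> bool) \<Rightarrow> nat" where
  "num_edges n E = card {(x, y). x < n \<and> y < n \<and> x < y \<and> E x y}"

definition codeg :: "nat \<Rightarrow> (nat \<Rightarrow> nat \<Rightarrow> bool) \<Rightarrow> nat \<Rightarrow> nat \<Rightarrow> nat" where
  "codeg n E v w = card {u. u < n \<and> E v u \<and> E w u}"

definition bipartite :: "nat \<Rightarrow> (nat \<Rightarrow> nat \<Rightarrow> bool) \<Rightarrow> bool" where
  "bipartite n E \<longleftrightarrow> (\<exists>S. S \<subseteq> {..<n} \<and> (\<forall>x y. E x y \<longrightarrow> (x \<in> S \<longleftrightarrow> y \<notin> S)))"

fun dist_le :: "nat \<Rightarrow> (nat \<Rightarrow> nat \<Rightarrow> bool) \<Rightarrow> nat \<Rightarrow> nat \<Rightarrow> nat \<Rightarrow> bool" where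
  "dist_le n E 0 x y = (x = y)"
| "dist_le n E (Suc j) x y = (dist_le n E j x y \<or> (\<exists>z<n. dist_le n E j x z \<and> E z y))"

definition diam_le :: "nat \<Rightarrow> (nat \<Rightarrow> nat \<Rightarrow> bool) \<Rightarrow> nat \<Rightarrow> bool" where
  "diam_le n E k \<longleftrightarrow> (\<forall>x<n. \<forall>y<n. dist_le n E k x y)"

text \<open>Spectral decomposition of the adjacency matrix: an orthonormal basis
  phi 0, ..., phi (n-1) of eigenvectors (phi j i = i-th entry of the j-th vector)
  with eigenvalues lam 0 \<ge> lam 1 \<ge> ... \<ge> lam (n-1). By the spectral theorem
  lam lists all adjacency eigenvalues with multiplicity in non-increasing order
  (lam 0 = \<lambda>_1, lam 1 = \<lambda>_2, lam (n-1) = \<lambda>_n), and phi 0 is a unit eigenvector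
  of the largest eigenvalue.\<close>
definition spectral_decomp ::
  "nat \<Rightarrow> (nat \<Rightarrow> nat \<Rightarrow> bool) \<Rightarrow> (nat \<Rightarrow> real) \<Rightarrow> (nat \<Rightarrow> nat \<Rightarrow> real) \<Rightarrow> bool" where
  "spectral_decomp n E lam phi \<longleftrightarrow>
     (\<forall>j<n. \<forall>j'<n. (\<Sum>i<n. phi j i * phi j' i) = (if j = j' then 1 else 0)) \<and>
     (\<forall>j<n. \<forall>i<n. (\<Sum>m<n. adj E i m * phi j m) = lam j * phi j i) \<and>
     (\<forall>j j'. j \<le> j' \<and> j' < n \<longrightarrow> lam j' \<le> lam j)"

text \<open>The class G_{k,n,p}; every O(.)-constant is C0, and the o(1) in (vii) is eta.\<close>
definition in_class ::
  "nat \<Rightarrow> nat \<Rightarrow> real \<Rightarrow> real \<Rightarrow> real \<Rightarrow> (nat \<Rightarrow> nat \<Rightarrow> bool) \<Rightarrow> bool" where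
  "in_class k n p C0 eta E \<longleftrightarrow>
     simple_graph n E \<and>
     \<not> bipartite n E \<and>
     diam_le n E k \<and>
     (\<forall>v<n. \<bar>real (deg n E v) - p * n\<bar> \<le> C0 * sqrt (p * n * ln n)) \<and>
     \<bar>2 * real (num_edges n E) - p * n^2\<bar> \<le> C0 * sqrt (p * n^2 * ln n) \<and>
     (\<forall>v<n. \<forall>w<n. v \<noteq> w \<longrightarrow>
        \<bar>real (codeg n E v w) - p^2 * n\<bar> \<le> C0 * max (sqrt (p^2 * n * ln n)) (ln n)) \<and>
     (\<exists>lam phi. spectral_decomp n E lam phi \<and>
        (\<forall>i<n. \<bar>phi 0 i - 1 / sqrt n\<bar> \<le> C0 * (ln n powr (3/2) / (sqrt p * n * ln (p * n)))) \<and>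
        \<bar>lam 0 - p * n\<bar> \<le> eta * (p * n) \<and>
        max \<bar>lam 1\<bar> \<bar>lam (n - 1)\<bar> \<le> C0 * sqrt (p * n))"

text \<open>Simple random walk: transition probabilities and mu_{l,w}.\<close>
definition trans :: "nat \<Rightarrow> (nat \<Rightarrow> nat \<Rightarrow> bool) \<Rightarrow> nat \<Rightarrow> nat \<Rightarrow> real" where
  "trans n E u x = adj E u x / real (deg n E u)"

fun walk_dist :: "nat \<Rightarrow> (nat \<Rightarrow> nat \<Rightarrow> bool) \<Rightarrow> nat \<Rightarrow> nat \<Rightarrow> nat \<Rightarrow> real" where
  "walk_dist n E 0 w x = (if x = w then 1 else 0)"
| "walk_dist n E (Suc l) w x = (\<Sum>u<n. walk_dist n E l w u * trans n E u x)"

text \<open>avoid_dist n E v t u x = P[X_t = x and X_s \<noteq> v for all s \<le> t | X_0 = u].\<close>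
fun avoid_dist :: "nat \<Rightarrow> (nat \<Rightarrow> nat \<Rightarrow> bool) \<Rightarrow> nat \<Rightarrow> nat \<Rightarrow> nat \<Rightarrow> nat \<Rightarrow> real" where
  "avoid_dist n E v 0 u x = (if x = u \<and> u \<noteq> v then 1 else 0)"
| "avoid_dist n E v (Suc t) u x =
     (if x = v then 0 else (\<Sum>y<n. avoid_dist n E v t u y * trans n E y x))"

text \<open>Expected first hitting time of v from u: E[T_v] = sum_{t \<ge> 0} P[T_v > t],
  where T_v = min{t \<ge> 0. X_t = v} (so H v v = 0).\<close>
definition hit_time :: "nat \<Rightarrow> (nat \<Rightarrow> nat \<Rightarrow> bool) \<Rightarrow> nat \<Rightarrow> nat \<Rightarrow> real" where
  "hit_time n E u v = (\<Sum>t. (\<Sum>x<n. avoid_dist n E v t u x))"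

definition hit_time_dist :: "nat \<Rightarrow> (nat \<Rightarrow> nat \<Rightarrow> bool) \<Rightarrow> (nat \<Rightarrow> real) \<Rightarrow> nat \<Rightarrow> real" where
  "hit_time_dist n E \<delta> v = (\<Sum>u<n. \<delta> u * hit_time n E u v)"

end

theory Submission imports Defs "HOL-Analysis.Analysis" "Jordan_Normal_Form.Determinant" begin

lemma ortho_complete:
  fixes phi :: "nat \<Rightarrow> nat \<Rightarrow> real"
  assumes orth: "\<forall>j<n. \<forall>j'<n. (\<Sum>i<n. phi j i * phi j' i) = (if j = j' then 1 else 0)"
    and i: "i < n" and i': "i' < n"
  shows "(\<Sum>j<n. phi j i * phi j i') = (if i = i' then 1 else 0)"
proof -
  define P :: "real mat" where "P = mat n n (\<lambda>(j,i). phi j i)"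
  have Pc: "P \<in> carrier_mat n n" "transpose_mat P \<in> carrier_mat n n" unfolding P_def by auto
  have "P * transpose_mat P = 1\<^sub>m n"
  proof (rule eq_matI)
    fix j j' assume "j < dim_row (1\<^sub>m n)" "j' < dim_col (1\<^sub>m n)"
    then have jj: "j < n" "j' < n" by auto
    have "(P * transpose_mat P) $$ (j, j') = (\<Sum>i<n. phi j i * phi j' i)"
      using jj unfolding P_def by (simp add: scalar_prod_def row_def col_def lessThan_atLeast0)
    also have "\<dots> = 1\<^sub>m n $$ (j, j')" using orth jj by auto
    finally show "(P * transpose_mat P) $$ (j, j') = 1\<^sub>m n $$ (j, j')" .
  qed (auto simp: P_def)
  then have "transpose_mat P * P = 1\<^sub>m n"
    using mat_mult_left_right_inverse Pc by blast
  then have "(transpose_mat P * P) $$ (i, i') = 1\<^sub>m n $$ (i, i')" by simp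
  moreover have "(transpose_mat P * P) $$ (i, i') = (\<Sum>j<n. phi j i * phi j i')"
    using i i' unfolding P_def by (simp add: scalar_prod_def row_def col_def lessThan_atLeast0)
  ultimately show ?thesis using i i' by auto
qed

lemma adj_sym: "simple_graph n E \<Longrightarrow> adj E x y = adj E y x"
  unfolding simple_graph_def adj_def by auto

lemma adj_out: "simple_graph n E \<Longrightarrow> \<not> (x < n \<and> y < n) \<Longrightarrow> adj E x y = 0"
  unfolding simple_graph_def adj_def by auto

lemma adj_nonneg: "adj E x y \<ge> 0" unfolding adj_def by auto
lemma adj_le1: "adj E x y \<le> 1" unfolding adj_def by auto

lemma deg_sum: "real (deg n E v) = (\<Sum>u<n. adj E v u)"
proof -
  have "(\<Sum>u<n. adj E v u) = (\<Sum>u\<in>{u. u < n \<and> E v u}. 1)"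
    unfolding adj_def by (rule sum.mono_neutral_cong_right) auto
  then show ?thesis unfolding deg_def by simp
qed

locale spec =
  fixes n :: nat and E :: "nat \<Rightarrow> nat \<Rightarrow> bool" and lam :: "nat \<Rightarrow> real" and phi :: "nat \<Rightarrow> nat \<Rightarrow> real"
  assumes sg: "simple_graph n E" and sd: "spectral_decomp n E lam phi"
begin

definition cf :: "(nat \<Rightarrow> real) \<Rightarrow> nat \<Rightarrow> real" where
  "cf f j = (\<Sum>i<n. f i * phi j i)"

definition Af :: "(nat \<Rightarrow> real) \<Rightarrow> nat \<Rightarrow> real" where
  "Af f i = (\<Sum>m<n. adj E i m * f m)"

lemma complete: "i < n \<Longrightarrow> i' < n \<Longrightarrow> (\<Sum>j<n. phi j i * phi j i') = (if i = i' then 1 else 0)"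
  using ortho_complete[of n phi] sd unfolding spectral_decomp_def by blast

lemma parseval: "(\<Sum>i<n. f i * g i) = (\<Sum>j<n. cf f j * cf g j)"
proof -
  have "(\<Sum>j<n. cf f j * cf g j) = (\<Sum>j<n. \<Sum>i<n. \<Sum>i'<n. f i * g i' * (phi j i * phi j i'))"
    unfolding cf_def sum_product by (simp add: algebra_simps)
  also have "\<dots> = (\<Sum>i<n. \<Sum>i'<n. \<Sum>j<n. f i * g i' * (phi j i * phi j i'))"
    by (subst sum.swap) (rule sum.cong[OF refl], rule sum.swap)
  also have "\<dots> = (\<Sum>i<n. \<Sum>i'<n. f i * g i' * (if i = i' then 1 else 0))"
    by (intro sum.cong refl) (simp add: sum_distrib_left[symmetric] complete)
  also have "\<dots> = (\<Sum>i<n. f i * g i)"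
    by (simp add: if_distrib cong: if_cong)
  finally show ?thesis by simp
qed

lemma cf_A: "j < n \<Longrightarrow> cf (Af f) j = lam j * cf f j"
proof -
  assume j: "j < n"
  have ev: "\<And>i. i < n \<Longrightarrow> (\<Sum>m<n. adj E i m * phi j m) = lam j * phi j i"
    using sd j unfolding spectral_decomp_def by blast
  have "cf (Af f) j = (\<Sum>i<n. \<Sum>m<n. adj E i m * f m * phi j i)"
    unfolding cf_def Af_def by (simp add: sum_distrib_right)
  also have "\<dots> = (\<Sum>m<n. f m * (\<Sum>i<n. adj E m i * phi j i))"
  proof -
    have "(\<Sum>i<n. \<Sum>m<n. adj E i m * f m * phi j i) = (\<Sum>m<n. \<Sum>i<n. adj E i m * f m * phi j i)"
      by (rule sum.swap)
    also have "\<dots> = (\<Sum>m<n. f m * (\<Sum>i<n. adj E m i * phi j i))"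
    proof (intro sum.cong refl)
      fix m assume "m \<in> {..<n}"
      show "(\<Sum>i<n. adj E i m * f m * phi j i) = f m * (\<Sum>i<n. adj E m i * phi j i)"
        unfolding sum_distrib_left by (intro sum.cong refl) (simp add: adj_sym[OF sg, of _ m])
    qed
    finally show ?thesis .
  qed
  also have "\<dots> = (\<Sum>m<n. f m * (lam j * phi j m))"
    by (intro sum.cong refl) (simp add: ev)
  also have "\<dots> = lam j * cf f j" unfolding cf_def by (simp add: sum_distrib_left algebra_simps)
  finally show ?thesis .
qed

lemma cf_lin: "cf (\<lambda>i. f i - x * g i) j = cf f j - x * cf g j"
  unfolding cf_def by (simp add: algebra_simps sum_subtractf sum_distrib_left)

lemma cf_lin1: "cf (\<lambda>i. f i - x) j = cf f j - x * cf (\<lambda>_. 1) j"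
  unfolding cf_def by (simp add: algebra_simps sum_subtractf sum_distrib_left)


lemma key:
  fixes a s e2 :: real and g :: "nat \<Rightarrow> real"
  assumes a: "a > 0" and s: "s \<ge> 0" and lamj: "\<forall>j. 1 \<le> j \<and> j < n \<longrightarrow> \<bar>lam j\<bar> \<le> s"
    and sa: "2 * s \<le> a"
    and dev: "(\<Sum>i<n. (Af (\<lambda>_. 1) i - a)^2) \<le> n * e2"
    and e2: "8 * e2 \<le> a^2"
    and orth: "(\<Sum>i<n. g i * Af (\<lambda>_. 1) i) = 0"
  shows "(\<Sum>i<n. (Af g i)^2) \<le> 2 * s^2 * (\<Sum>i<n. (g i)^2)"
proof (cases "n = 0")
  case True then show ?thesis by simp
next
  case False
  then have n0: "0 < n" by simp
  define b where "b j = cf (\<lambda>_. 1) j" for j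
  define c where "c j = cf g j" for j
  define J where "J = {..<n} - {0}"
  have J: "\<And>j. j \<in> J \<Longrightarrow> 1 \<le> j \<and> j < n" unfolding J_def by auto
  have fJ: "finite J" unfolding J_def by auto
  have split: "\<And>f. (\<Sum>j<n. f j) = f 0 + (\<Sum>j\<in>J. f j)"
    unfolding J_def using n0 by (subst sum.remove[of _ 0]) auto
  define G where "G = (\<Sum>i<n. (g i)^2)"
  have G: "G = (\<Sum>j<n. (c j)^2)"
    unfolding G_def c_def power2_eq_square by (rule parseval)
  have G0: "G \<ge> 0" unfolding G_def by (auto intro: sum_nonneg)
  have bn: "(\<Sum>j<n. (b j)^2) = n"
    using parseval[of "\<lambda>_. 1" "\<lambda>_. 1"] unfolding b_def power2_eq_square by simp
  have "(\<Sum>i<n. (Af (\<lambda>_. 1) i - a)^2) = (\<Sum>j<n. (cf (\<lambda>i. Af (\<lambda>_. 1) i - a * 1) j)^2)"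
    using parseval[of "\<lambda>i. Af (\<lambda>_. 1) i - a * 1" "\<lambda>i. Af (\<lambda>_. 1) i - a * 1"]
    unfolding power2_eq_square by simp
  also have "\<dots> = (\<Sum>j<n. ((lam j - a) * b j)^2)"
    by (intro sum.cong refl) (simp add: cf_lin1 cf_A b_def algebra_simps)
  finally have dev2: "(\<Sum>j<n. ((lam j - a) * b j)^2) \<le> n * e2" using dev by simp
  have "(\<Sum>j\<in>J. (a^2/4) * (b j)^2) \<le> (\<Sum>j\<in>J. ((lam j - a) * b j)^2)"
  proof (rule sum_mono)
    fix j assume "j \<in> J"
    then have "\<bar>lam j\<bar> \<le> s" using lamj J by blast
    then have "a / 2 \<le> a - lam j" using sa by auto
    then have "(a/2)^2 \<le> (a - lam j)^2" using a by (intro power_mono) auto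
    then have "(a^2/4) * (b j)^2 \<le> (a - lam j)^2 * (b j)^2"
      by (intro mult_right_mono) (auto simp: power_divide)
    then show "(a^2/4) * (b j)^2 \<le> ((lam j - a) * b j)^2"
      by (simp add: power_mult_distrib power2_commute)
  qed
  also have "\<dots> \<le> (\<Sum>j<n. ((lam j - a) * b j)^2)"
    by (subst split[of "\<lambda>j. ((lam j - a) * b j)^2"]) simp
  finally have "(a^2/4) * (\<Sum>j\<in>J. (b j)^2) \<le> n * e2"
    using dev2 by (simp add: sum_distrib_left)
  then have S1: "(\<Sum>j\<in>J. (b j)^2) \<le> 4 * n * e2 / a^2"
    using a by (simp add: field_simps)
  have "4 * n * e2 / a^2 \<le> n / 2"
    using e2 a n0 by (simp add: field_simps)
  with S1 have S1': "(\<Sum>j\<in>J. (b j)^2) \<le> n / 2" by linarith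
  have b0: "(b 0)^2 \<ge> n / 2" using bn split[of "\<lambda>j. (b j)^2"] S1' by linarith
  have "(\<Sum>i<n. g i * Af (\<lambda>_. 1) i) = (\<Sum>j<n. c j * (lam j * b j))"
    using parseval[of g "Af (\<lambda>_. 1)"] unfolding c_def b_def by (simp add: cf_A)
  then have "c 0 * lam 0 * b 0 = - (\<Sum>j\<in>J. (c j * lam j) * b j)"
    using orth split[of "\<lambda>j. c j * (lam j * b j)"] by (simp add: mult_ac)
  then have "(c 0 * lam 0)^2 * (b 0)^2 = (\<Sum>j\<in>J. (c j * lam j) * b j)^2"
    by (simp add: power_mult_distrib[symmetric])
  also have "\<dots> \<le> (\<Sum>j\<in>J. (c j * lam j)^2) * (\<Sum>j\<in>J. (b j)^2)"
    by (rule Cauchy_Schwarz_ineq_sum)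
  finally have A1: "(c 0 * lam 0)^2 * (b 0)^2 \<le> (\<Sum>j\<in>J. (c j * lam j)^2) * (\<Sum>j\<in>J. (b j)^2)" .
  have "(\<Sum>j\<in>J. (c j * lam j)^2) \<le> (\<Sum>j\<in>J. s^2 * (c j)^2)"
  proof (rule sum_mono)
    fix j assume "j \<in> J"
    then have "\<bar>lam j\<bar> \<le> s" using lamj J by blast
    then have "(lam j)^2 \<le> s^2" using abs_le_square_iff by (metis abs_of_nonneg s)
    then have "(c j)^2 * (lam j)^2 \<le> (c j)^2 * s^2" by (intro mult_left_mono) auto
    then show "(c j * lam j)^2 \<le> s^2 * (c j)^2"
      by (simp add: power_mult_distrib mult.commute)
  qed
  also have "(\<Sum>j\<in>J. s^2 * (c j)^2) \<le> s^2 * G"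
  proof -
    have "(\<Sum>j\<in>J. (c j)^2) \<le> G" using G split[of "\<lambda>j. (c j)^2"] by simp
    then show ?thesis by (simp add: sum_distrib_left[symmetric] mult_left_mono)
  qed
  finally have A2: "(\<Sum>j\<in>J. (c j * lam j)^2) \<le> s^2 * G" .
  have A3: "(\<Sum>j\<in>J. (b j)^2) \<le> n / 2" by (rule S1')
  have "(\<Sum>j\<in>J. (c j * lam j)^2) * (\<Sum>j\<in>J. (b j)^2) \<le> (s^2 * G) * (n / 2)"
    using A2 A3 by (intro mult_mono) (auto intro: sum_nonneg mult_nonneg_nonneg G0)
  with A1 have A4: "(c 0 * lam 0)^2 * (b 0)^2 \<le> (s^2 * G) * (n / 2)" by linarith
  have "(c 0 * lam 0)^2 * (n / 2) \<le> (c 0 * lam 0)^2 * (b 0)^2"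
    using b0 by (intro mult_left_mono) auto
  with A4 have "(c 0 * lam 0)^2 * (n / 2) \<le> (s^2 * G) * (n / 2)" by linarith
  then have c0: "(c 0 * lam 0)^2 \<le> s^2 * G"
    using n0 by (simp add: mult_le_cancel_right)
  have "(\<Sum>i<n. (Af g i)^2) = (\<Sum>j<n. (lam j * c j)^2)"
    using parseval[of "Af g" "Af g"] unfolding c_def power2_eq_square by (simp add: cf_A)
  also have "\<dots> = (lam 0 * c 0)^2 + (\<Sum>j\<in>J. (lam j * c j)^2)" by (rule split)
  also have "(\<Sum>j\<in>J. (lam j * c j)^2) \<le> (\<Sum>j\<in>J. s^2 * (c j)^2)"
  proof (rule sum_mono)
    fix j assume "j \<in> J"
    then have "\<bar>lam j\<bar> \<le> s" using lamj J by blast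
    then have "(lam j)^2 \<le> s^2" using abs_le_square_iff by (metis abs_of_nonneg s)
    then have "(c j)^2 * (lam j)^2 \<le> (c j)^2 * s^2" by (intro mult_left_mono) auto
    then show "(lam j * c j)^2 \<le> s^2 * (c j)^2"
      by (simp add: power_mult_distrib mult.commute)
  qed
  also have "(\<Sum>j\<in>J. s^2 * (c j)^2) \<le> s^2 * G"
    using G split[of "\<lambda>j. (c j)^2"] s by (simp add: sum_distrib_left[symmetric] mult_left_mono)
  finally show ?thesis using c0 unfolding G_def by (simp add: mult.commute)
qed

end


definition stp :: "nat \<Rightarrow> (nat \<Rightarrow> nat \<Rightarrow> bool) \<Rightarrow> (nat \<Rightarrow> real) \<Rightarrow> nat \<Rightarrow> real" where
  "stp n E f x = (\<Sum>u<n. f u * trans n E u x)"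

definition QF :: "nat \<Rightarrow> (nat \<Rightarrow> nat \<Rightarrow> bool) \<Rightarrow> (nat \<Rightarrow> real) \<Rightarrow> real" where
  "QF n E f = (\<Sum>u<n. (f u)^2 / real (deg n E u))"

context spec begin

lemma Af_one: "Af (\<lambda>_. 1) i = real (deg n E i)"
  unfolding Af_def by (simp add: deg_sum)

lemma contraction:
  fixes a s e2 :: real and f :: "nat \<Rightarrow> real"
  assumes a: "a > 0" and s: "s \<ge> 0" and lamj: "\<forall>j. 1 \<le> j \<and> j < n \<longrightarrow> \<bar>lam j\<bar> \<le> s"
    and sa: "2 * s \<le> a"
    and dev: "(\<Sum>i<n. (real (deg n E i) - a)^2) \<le> n * e2"
    and e2: "8 * e2 \<le> a^2"
    and dlo: "\<forall>v<n. a / 2 \<le> real (deg n E v)"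
    and f0: "(\<Sum>u<n. f u) = 0"
  shows "QF n E (stp n E f) \<le> (8 * s^2 / a^2) * QF n E f"
proof -
  define g where "g u = f u / real (deg n E u)" for u
  have dpos: "\<And>u. u < n \<Longrightarrow> real (deg n E u) > 0" using dlo a
    by (metis half_gt_zero_iff order_less_le_trans)
  have Ag: "\<And>x. x < n \<Longrightarrow> Af g x = stp n E f x"
    unfolding Af_def stp_def g_def trans_def
    by (intro sum.cong refl) (subst adj_sym[OF sg], simp)
  have orth: "(\<Sum>i<n. g i * Af (\<lambda>_. 1) i) = 0"
    using f0 dpos by (simp add: Af_one g_def)
  have K: "(\<Sum>i<n. (Af g i)^2) \<le> 2 * s^2 * (\<Sum>i<n. (g i)^2)"
    by (rule key[OF a s lamj sa _ e2 orth]) (simp add: Af_one dev)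
  have "QF n E (stp n E f) = (\<Sum>x<n. (Af g x)^2 / real (deg n E x))"
    unfolding QF_def by (intro sum.cong refl) (simp add: Ag)
  also have "\<dots> \<le> (\<Sum>x<n. (Af g x)^2 * (2 / a))"
  proof (rule sum_mono)
    fix x assume "x \<in> {..<n}"
    then have "a / 2 \<le> real (deg n E x)" using dlo by auto
    then have "1 / real (deg n E x) \<le> 2 / a" using a by (simp add: field_simps)
    then show "(Af g x)^2 / real (deg n E x) \<le> (Af g x)^2 * (2 / a)"
      by (metis mult_left_mono times_divide_eq_right mult.right_neutral zero_le_power2)
  qed
  also have "\<dots> = (2 / a) * (\<Sum>x<n. (Af g x)^2)" by (simp only: sum_distrib_left mult.commute)
  also have "\<dots> \<le> (2 / a) * (2 * s^2 * (\<Sum>i<n. (g i)^2))"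
    using K a by (intro mult_left_mono) auto
  also have "(\<Sum>i<n. (g i)^2) \<le> (2 / a) * QF n E f"
  proof -
    have "(\<Sum>i<n. (g i)^2) \<le> (\<Sum>i<n. (2 / a) * ((f i)^2 / real (deg n E i)))"
    proof (rule sum_mono)
      fix i assume "i \<in> {..<n}"
      then have d: "a / 2 \<le> real (deg n E i)" "real (deg n E i) > 0" using dlo dpos by auto
      then have "1 / real (deg n E i) \<le> 2 / a" using a by (simp add: field_simps)
      then have "(f i)^2 / real (deg n E i) * (1 / real (deg n E i)) \<le> (f i)^2 / real (deg n E i) * (2 / a)"
        using d by (intro mult_left_mono) auto
      then show "(g i)^2 \<le> (2 / a) * ((f i)^2 / real (deg n E i))"
        unfolding g_def by (simp add: power2_eq_square mult.commute)
    qed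
    then show ?thesis unfolding QF_def by (simp add: sum_distrib_left)
  qed
  then have "(2 / a) * (2 * s^2 * (\<Sum>i<n. (g i)^2)) \<le> (2 / a) * (2 * s^2 * ((2 / a) * QF n E f))"
    using a by (intro mult_left_mono) auto
  finally show ?thesis using a by (simp add: field_simps power2_eq_square)
qed

end


definition stpn :: "nat \<Rightarrow> (nat \<Rightarrow> nat \<Rightarrow> bool) \<Rightarrow> nat \<Rightarrow> (nat \<Rightarrow> real) \<Rightarrow> nat \<Rightarrow> real" where
  "stpn n E t f = (stp n E ^^ t) f"

locale gr =
  fixes n :: nat and E :: "nat \<Rightarrow> nat \<Rightarrow> bool" and a L :: real
  assumes sg: "simple_graph n E" and apos: "a > 0"
    and dlo: "\<forall>v<n. a / 2 \<le> real (deg n E v)"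
    and dhi: "\<forall>v<n. real (deg n E v) \<le> 3 * a / 2"
    and L0: "L \<ge> 0"
    and contr: "\<forall>f. (\<Sum>u<n. f u) = 0 \<longrightarrow> QF n E (stp n E f) \<le> L * QF n E f"
begin

lemma dpos: "u < n \<Longrightarrow> real (deg n E u) > 0"
  using dlo apos by (metis half_gt_zero_iff order_less_le_trans)

lemma trans_nonneg: "trans n E u x \<ge> 0"
  unfolding trans_def by (simp add: adj_nonneg)

lemma trans_out: "x \<ge> n \<Longrightarrow> trans n E u x = 0"
  unfolding trans_def using adj_out[OF sg] by simp

lemma trans_sum: "u < n \<Longrightarrow> (\<Sum>x<n. trans n E u x) = 1"
  using dpos[of u] unfolding trans_def by (simp add: sum_divide_distrib[symmetric] deg_sum[symmetric])

lemma stp_sum: "(\<Sum>x<n. stp n E f x) = (\<Sum>u<n. f u)"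
proof -
  have "(\<Sum>x<n. stp n E f x) = (\<Sum>u<n. f u * (\<Sum>x<n. trans n E u x))"
    unfolding stp_def by (subst sum.swap) (simp add: sum_distrib_left)
  also have "\<dots> = (\<Sum>u<n. f u)" by (intro sum.cong refl) (simp add: trans_sum)
  finally show ?thesis .
qed

lemma stpn_Suc: "stpn n E (Suc t) f = stp n E (stpn n E t f)"
  unfolding stpn_def by simp

lemma stpn_sum: "(\<Sum>x<n. stpn n E t f x) = (\<Sum>u<n. f u)"
  by (induction t) (auto simp: stpn_Suc stp_sum, simp add: stpn_def)

lemma stp_diff: "stp n E (\<lambda>x. f x - g x) = (\<lambda>x. stp n E f x - stp n E g x)"
  unfolding stp_def by (auto simp: sum_subtractf left_diff_distrib)

lemma stpn_diff: "stpn n E t (\<lambda>x. f x - g x) = (\<lambda>x. stpn n E t f x - stpn n E t g x)"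
  by (induction t) (auto simp: stpn_Suc stp_diff, simp add: stpn_def)

lemma QF_nonneg: "QF n E f \<ge> 0"
  unfolding QF_def by (intro sum_nonneg) auto

lemma Q_iter: "(\<Sum>u<n. f u) = 0 \<Longrightarrow> QF n E (stpn n E t f) \<le> L^t * QF n E f"
proof (induction t)
  case 0 then show ?case by (simp add: stpn_def)
next
  case (Suc t)
  have "QF n E (stpn n E (Suc t) f) \<le> L * QF n E (stpn n E t f)"
    unfolding stpn_Suc using contr stpn_sum Suc.prems by metis
  also have "\<dots> \<le> L * (L^t * QF n E f)" using Suc L0 by (intro mult_left_mono) auto
  finally show ?case by (simp add: mult.assoc)
qed

lemma pointwise: "x < n \<Longrightarrow> (f x)^2 \<le> (3 * a / 2) * QF n E f"
proof -
  assume x: "x < n"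
  have "(f x)^2 / real (deg n E x) \<le> QF n E f"
    unfolding QF_def using x by (intro member_le_sum) auto
  then have "(f x)^2 \<le> real (deg n E x) * QF n E f"
    using dpos[OF x] by (simp add: field_simps)
  also have "\<dots> \<le> (3 * a / 2) * QF n E f"
    using dhi x QF_nonneg by (intro mult_right_mono) auto
  finally show ?thesis .
qed

lemma QF_small:
  assumes "\<forall>u<n. \<bar>f u\<bar> \<le> 1" and "(\<Sum>u<n. \<bar>f u\<bar>) \<le> 2"
  shows "QF n E f \<le> 4 / a"
proof -
  have "QF n E f \<le> (\<Sum>u<n. \<bar>f u\<bar> * (2 / a))"
    unfolding QF_def
  proof (rule sum_mono)
    fix u assume u: "u \<in> {..<n}"
    have "(f u)^2 \<le> \<bar>f u\<bar>" using assms(1) u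
      by (metis abs_ge_zero abs_mult_self_eq lessThan_iff mult_left_le power2_eq_square)
    moreover have "1 / real (deg n E u) \<le> 2 / a" using dlo u apos dpos[of u] by (simp add: field_simps)
    ultimately have "(f u)^2 * (1 / real (deg n E u)) \<le> \<bar>f u\<bar> * (2 / a)"
      using apos by (intro mult_mono) auto
    then show "(f u)^2 / real (deg n E u) \<le> \<bar>f u\<bar> * (2 / a)" by simp
  qed
  also have "\<dots> = (\<Sum>u<n. \<bar>f u\<bar>) * (2 / a)" by (simp only: sum_distrib_right)
  also have "\<dots> \<le> 2 * (2 / a)" using assms(2) apos by (intro mult_right_mono) auto
  finally show ?thesis by simp
qed

lemma decay:
  assumes "(\<Sum>u<n. f u) = 0" "QF n E f \<le> 4 / a" "x < n"
  shows "(stpn n E t f x)^2 \<le> 6 * L^t"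
proof -
  have "(stpn n E t f x)^2 \<le> (3 * a / 2) * QF n E (stpn n E t f)" by (rule pointwise[OF assms(3)])
  also have "\<dots> \<le> (3 * a / 2) * (L^t * (4 / a))"
  proof -
    have "L^t * QF n E f \<le> L^t * (4 / a)" using assms(2) L0 by (intro mult_left_mono) auto
    then have "QF n E (stpn n E t f) \<le> L^t * (4 / a)" using Q_iter[OF assms(1), of t] by linarith
    then show ?thesis using apos by (intro mult_left_mono) auto
  qed
  also have "\<dots> = 6 * L^t" using apos by (simp add: field_simps)
  finally show ?thesis .
qed

lemma walk_Suc: "walk_dist n E (Suc l) w = stp n E (walk_dist n E l w)"
  by (rule ext) (simp add: stp_def)

lemma walk_add: "walk_dist n E (l + t) w = stpn n E t (walk_dist n E l w)"
  by (induction t) (auto simp: stpn_Suc walk_Suc, simp add: stpn_def)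

lemma walk_nonneg: "walk_dist n E t w x \<ge> 0"
  by (induction t arbitrary: x) (auto intro!: sum_nonneg mult_nonneg_nonneg trans_nonneg)

lemma walk_sum: "w < n \<Longrightarrow> (\<Sum>x<n. walk_dist n E t w x) = 1"
proof (induction t)
  case 0 then show ?case by (simp add: sum.delta)
next
  case (Suc t) then show ?case by (simp add: walk_Suc stp_sum)
qed

lemma walk_le1: "w < n \<Longrightarrow> x < n \<Longrightarrow> walk_dist n E t w x \<le> 1"
  using walk_sum[of w t] member_le_sum[of x "{..<n}" "walk_dist n E t w"] walk_nonneg by auto

lemma walk_diff:
  assumes "w < n" "w' < n" "x < n"
  shows "(walk_dist n E t w x - walk_dist n E t w' x)^2 \<le> 6 * L^t"
proof -
  define f where "f u = walk_dist n E 0 w u - walk_dist n E 0 w' u" for u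
  have "walk_dist n E t w x - walk_dist n E t w' x = stpn n E t f x"
    using walk_add[of 0 t] stpn_diff[of t "walk_dist n E 0 w" "walk_dist n E 0 w'"]
    unfolding f_def by (metis add_0)
  moreover have "(\<Sum>u<n. f u) = 0" unfolding f_def using assms by (simp add: sum_subtractf sum.delta)
  moreover have "QF n E f \<le> 4 / a"
  proof (rule QF_small)
    show "\<forall>u<n. \<bar>f u\<bar> \<le> 1" unfolding f_def by auto
    have "(\<Sum>u<n. \<bar>f u\<bar>) \<le> (\<Sum>u<n. walk_dist n E 0 w u + walk_dist n E 0 w' u)"
      unfolding f_def by (intro sum_mono) auto
    also have "\<dots> = 2" using assms by (simp add: sum.distrib sum.delta)
    finally show "(\<Sum>u<n. \<bar>f u\<bar>) \<le> 2" .
  qed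
  ultimately show ?thesis using decay assms(3) by metis
qed

definition Dt where "Dt = (\<Sum>u<n. real (deg n E u))"
definition pi where "pi u = real (deg n E u) / Dt" for u

lemma deg_out: "u \<ge> n \<Longrightarrow> deg n E u = 0"
proof -
  assume u: "u \<ge> n"
  have "{x. x < n \<and> E u x} = {}" using sg u unfolding simple_graph_def by (auto simp: not_less[symmetric])
  then show ?thesis unfolding deg_def by simp
qed

lemma stp_pi: "stp n E pi = pi"
proof (rule ext)
  fix x
  show "stp n E pi x = pi x"
  proof (cases "x < n")
    case True
    have "stp n E pi x = (\<Sum>u<n. adj E x u / Dt)"
      unfolding stp_def pi_def trans_def
      by (intro sum.cong refl) (use dpos in \<open>auto simp: adj_sym[OF sg, of x]\<close>)
    also have "\<dots> = pi x" unfolding pi_def by (simp add: sum_divide_distrib[symmetric] deg_sum)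
    finally show ?thesis .
  next
    case False
    then show ?thesis unfolding stp_def pi_def by (simp add: trans_out deg_out)
  qed
qed

lemma stpn_pi: "stpn n E t pi = pi"
  by (induction t) (auto simp: stpn_Suc stp_pi, simp add: stpn_def)

lemma Dt_pos: "n > 0 \<Longrightarrow> Dt > 0"
  unfolding Dt_def using dpos by (intro sum_pos) auto

lemma pi_sum: "n > 0 \<Longrightarrow> (\<Sum>u<n. pi u) = 1"
  using Dt_pos unfolding pi_def by (simp add: sum_divide_distrib[symmetric] Dt_def[symmetric])

lemma pi_nonneg: "n > 0 \<Longrightarrow> pi u \<ge> 0"
  using Dt_pos unfolding pi_def by simp

lemma pi_le1: "n > 0 \<Longrightarrow> u < n \<Longrightarrow> pi u \<le> 1"
  using pi_sum member_le_sum[of u "{..<n}" pi] pi_nonneg by auto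

lemma pi_lo: "v < n \<Longrightarrow> pi v \<ge> 1 / (3 * n)"
proof -
  assume v: "v < n"
  then have n0: "n > 0" by simp
  have "Dt \<le> (\<Sum>u<n. 3 * a / 2)" unfolding Dt_def using dhi by (intro sum_mono) auto
  then have D: "Dt \<le> n * (3 * a / 2)" by simp
  have "1 / (3 * n) = (a / 2) / (n * (3 * a / 2))" using apos n0 by (simp add: field_simps)
  also have "\<dots> \<le> real (deg n E v) / (n * (3 * a / 2))"
    using dlo v apos n0 by (intro divide_right_mono) auto
  also have "\<dots> \<le> real (deg n E v) / Dt"
  proof (rule divide_left_mono)
    show "Dt \<le> n * (3 * a / 2)" by (rule D)
    show "0 \<le> real (deg n E v)" by simp
    show "0 < n * (3 * a / 2) * Dt" using apos n0 Dt_pos[OF n0] by simp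
  qed
  finally show ?thesis unfolding pi_def .
qed

lemma walk_pi:
  assumes "y < n" "x < n"
  shows "(walk_dist n E t y x - pi x)^2 \<le> 6 * L^t"
proof -
  have n0: "n > 0" using assms by simp
  define f where "f u = walk_dist n E 0 y u - pi u" for u
  have "walk_dist n E t y x - pi x = stpn n E t f x"
    using walk_add[of 0 t] stpn_diff[of t "walk_dist n E 0 y" pi] stpn_pi[of t]
    unfolding f_def by (metis add_0)
  moreover have "(\<Sum>u<n. f u) = 0" unfolding f_def using assms pi_sum[OF n0]
    by (simp add: sum_subtractf sum.delta)
  moreover have "QF n E f \<le> 4 / a"
  proof (rule QF_small)
    show "\<forall>u<n. \<bar>f u\<bar> \<le> 1" unfolding f_def using pi_nonneg[OF n0] pi_le1[OF n0] by auto
    have "(\<Sum>u<n. \<bar>f u\<bar>) \<le> (\<Sum>u<n. walk_dist n E 0 y u + pi u)"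
    proof (intro sum_mono)
      fix u assume "u \<in> {..<n}"
      have "0 \<le> pi u" "0 \<le> walk_dist n E 0 y u" using pi_nonneg[OF n0] walk_nonneg by auto
      then show "\<bar>f u\<bar> \<le> walk_dist n E 0 y u + pi u" unfolding f_def by linarith
    qed
    also have "\<dots> = 2" using assms pi_sum[OF n0] by (simp add: sum.distrib sum.delta)
    finally show "(\<Sum>u<n. \<bar>f u\<bar>) \<le> 2" .
  qed
  ultimately show ?thesis using decay assms(2) by metis
qed

end


lemma le_of_limit:
  fixes x B K lam :: real
  assumes "\<And>T. x \<le> B + K * lam ^ T" "0 \<le> lam" "lam < 1"
  shows "x \<le> B"
proof -
  have "(\<lambda>T. B + K * lam ^ T) \<longlonglongrightarrow> B + K * 0"
    by (intro tendsto_intros LIMSEQ_power_zero) (use assms in auto)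
  then show ?thesis using assms(1) by (intro LIMSEQ_le_const[of "\<lambda>T. B + K * lam ^ T"]) auto
qed

context gr begin

definition aa where "aa v t u = (\<Sum>x<n. avoid_dist n E v t u x)"

lemma avoid_at_v: "avoid_dist n E v t u v = 0"
  by (cases t) auto

lemma avoid_from_v: "avoid_dist n E v t v x = 0"
  by (induction t arbitrary: x) auto

lemma avoid_nonneg: "avoid_dist n E v t u x \<ge> 0"
  by (induction t arbitrary: x) (auto intro!: sum_nonneg mult_nonneg_nonneg trans_nonneg)

lemma avoid_out: "u < n \<Longrightarrow> x \<ge> n \<Longrightarrow> avoid_dist n E v t u x = 0"
  by (cases t) (auto simp: trans_out)

lemma avoid_le_walk: "avoid_dist n E v t u x \<le> walk_dist n E t u x"
proof (induction t arbitrary: x)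
  case 0 then show ?case by auto
next
  case (Suc t)
  show ?case
  proof (cases "x = v")
    case True then show ?thesis using walk_nonneg[of "Suc t" u x] by (simp del: walk_dist.simps)
  next
    case False
    then show ?thesis using Suc
      by (auto intro!: sum_mono mult_right_mono trans_nonneg)
  qed
qed

lemma CK: "u < n \<Longrightarrow> avoid_dist n E v (t + s) u x = (\<Sum>y<n. avoid_dist n E v t u y * avoid_dist n E v s y x)"
proof (induction s arbitrary: x)
  case 0
  have "(\<Sum>y<n. avoid_dist n E v t u y * avoid_dist n E v 0 y x)
      = (\<Sum>y<n. if y = x then (if x \<noteq> v then avoid_dist n E v t u y else 0) else 0)"
    by (intro sum.cong refl) auto
  also have "\<dots> = (if x < n then (if x \<noteq> v then avoid_dist n E v t u x else 0) else 0)"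
    by (simp add: sum.delta')
  also have "\<dots> = avoid_dist n E v t u x"
    using avoid_at_v avoid_out[OF 0] by auto
  finally show ?case by simp
next
  case (Suc s)
  show ?case
  proof (cases "x = v")
    case True then show ?thesis by simp
  next
    case False
    have "avoid_dist n E v (t + Suc s) u x = (\<Sum>z<n. avoid_dist n E v (t + s) u z * trans n E z x)"
      using False by simp
    also have "\<dots> = (\<Sum>z<n. \<Sum>y<n. avoid_dist n E v t u y * avoid_dist n E v s y z * trans n E z x)"
      using Suc by (simp add: sum_distrib_right)
    also have "\<dots> = (\<Sum>y<n. \<Sum>z<n. avoid_dist n E v t u y * avoid_dist n E v s y z * trans n E z x)"
      by (rule sum.swap)
    also have "\<dots> = (\<Sum>y<n. avoid_dist n E v t u y * avoid_dist n E v (Suc s) y x)"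
      using False by (simp add: sum_distrib_left mult.assoc)
    finally show ?thesis .
  qed
qed

lemma aa_add: "u < n \<Longrightarrow> aa v (t + s) u = (\<Sum>y<n. avoid_dist n E v t u y * aa v s y)"
  unfolding aa_def by (simp add: CK sum_distrib_left) (rule sum.swap)

lemma aa_nonneg: "aa v t u \<ge> 0"
  unfolding aa_def by (intro sum_nonneg avoid_nonneg)

lemma aa_v: "aa v t v = 0"
  unfolding aa_def by (simp add: avoid_from_v)

lemma aa_0: "u < n \<Longrightarrow> aa v 0 u = (if u = v then 0 else 1)"
  unfolding aa_def by (simp add: sum.delta')

lemma aa_Suc:
  assumes "u < n" "u \<noteq> v"
  shows "aa v (Suc s) u = (\<Sum>y<n. trans n E u y * aa v s y)"
proof -
  have "aa v (Suc s) u = aa v (1 + s) u" by simp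
  also have "\<dots> = (\<Sum>y<n. avoid_dist n E v 1 u y * aa v s y)" by (rule aa_add[OF assms(1)])
  also have "\<dots> = (\<Sum>y<n. trans n E u y * aa v s y)"
  proof (intro sum.cong refl)
    fix y assume "y \<in> {..<n}"
    have "avoid_dist n E v 1 u y = (if y = v then 0 else (\<Sum>z<n. (if z = u then 1 else 0) * trans n E z y))"
      using assms by simp
    also have "\<dots> = (if y = v then 0 else trans n E u y)"
    proof -
      have "\<And>z. (if z = u then 1 else 0) * trans n E z y = (if z = u then trans n E u y else 0)" by simp
      then have "(\<Sum>z<n. (if z = u then 1 else 0) * trans n E z y) = trans n E u y"
        using assms(1) by (simp add: sum.delta')
      then show ?thesis by simp
    qed
    finally show "avoid_dist n E v 1 u y * aa v s y = trans n E u y * aa v s y"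
      by (simp add: aa_v)
  qed
  finally show ?thesis .
qed

lemma aa_le1: "u < n \<Longrightarrow> aa v t u \<le> 1"
  unfolding aa_def using walk_sum[of u t] avoid_le_walk
  by (metis (no_types, lifting) sum_mono)

lemma aa_lo:
  assumes "y < n" "v < n"
  shows "aa v t y \<le> 1 - walk_dist n E t y v"
proof -
  have "aa v t y \<le> (\<Sum>x<n. if x = v then 0 else walk_dist n E t y x)"
    unfolding aa_def using avoid_le_walk avoid_at_v by (intro sum_mono) auto
  also have "\<dots> = (\<Sum>x<n. walk_dist n E t y x) - walk_dist n E t y v"
  proof -
    have "\<And>x. (if x = v then 0 else walk_dist n E t y x) = walk_dist n E t y x - (if x = v then walk_dist n E t y v else 0)"
      by simp
    then show ?thesis using assms(2) by (simp add: sum_subtractf sum.delta')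
  qed
  finally show ?thesis using walk_sum[OF assms(1)] by simp
qed

end

locale hit = gr +
  fixes v l :: nat and q :: real
  assumes v: "v < n" and l: "l > 0" and q: "0 < q" "q \<le> 1"
    and walk_lo: "\<forall>y<n. q \<le> walk_dist n E l y v"
begin

lemma aa_step: "u < n \<Longrightarrow> aa v (t + l) u \<le> (1 - q) * aa v t u"
proof -
  assume u: "u < n"
  have "aa v (t + l) u = (\<Sum>y<n. avoid_dist n E v t u y * aa v l y)" by (rule aa_add[OF u])
  also have "\<dots> \<le> (\<Sum>y<n. avoid_dist n E v t u y * (1 - q))"
  proof (intro sum_mono mult_left_mono)
    fix y assume "y \<in> {..<n}"
    then show "aa v l y \<le> 1 - q" using aa_lo[of y v l] v walk_lo by force
  qed (rule avoid_nonneg)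
  also have "\<dots> = (1 - q) * aa v t u" unfolding aa_def by (simp add: sum_distrib_left mult.commute)
  finally show ?thesis .
qed

lemma aa_block: "u < n \<Longrightarrow> aa v (j * l + r) u \<le> (1 - q)^j"
proof (induction j)
  case 0 then show ?case using aa_le1 by simp
next
  case (Suc j)
  have "aa v (Suc j * l + r) u = aa v ((j * l + r) + l) u" by (simp add: algebra_simps)
  also have "\<dots> \<le> (1 - q) * aa v (j * l + r) u" by (rule aa_step[OF Suc.prems])
  also have "\<dots> \<le> (1 - q) * (1 - q)^j" using Suc q by (intro mult_left_mono) auto
  finally show ?case by simp
qed

lemma aa_partial: "u < n \<Longrightarrow> (\<Sum>t<N. aa v t u) \<le> l / q"
proof -
  assume u: "u < n"
  have "(\<Sum>t<N. aa v t u) \<le> (\<Sum>t<N * l. aa v t u)"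
    using l by (intro sum_mono2) (auto simp: aa_nonneg)
  also have "\<dots> = (\<Sum>i<N. \<Sum>t\<in>{i * l..<i * l + l}. aa v t u)"
    by (rule sum.nat_group[symmetric])
  also have "\<dots> \<le> (\<Sum>i<N. \<Sum>t\<in>{i * l..<i * l + l}. (1 - q)^i)"
  proof (intro sum_mono)
    fix i t assume "t \<in> {i * l..<i * l + l}"
    then have "t = i * l + (t - i * l)" by auto
    then show "aa v t u \<le> (1 - q)^i" using aa_block[OF u, of i "t - i * l"] by metis
  qed
  also have "\<dots> = l * (\<Sum>i<N. (1 - q)^i)" by (simp add: sum_distrib_left)
  also have "\<dots> \<le> l * (1 / q)"
  proof (intro mult_left_mono)
    have "(\<Sum>i<N. (1 - q)^i) = (1 - (1 - q)^N) / q" using q by (simp add: sum_gp_strict)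
    also have "\<dots> \<le> 1 / q" using q by (intro divide_right_mono) auto
    finally show "(\<Sum>i<N. (1 - q)^i) \<le> 1 / q" .
  qed auto
  finally show ?thesis by simp
qed

lemma aa_summable: "u < n \<Longrightarrow> summable (\<lambda>t. aa v t u)"
  using aa_partial[of u "Suc _"] by (intro bounded_imp_summable[where B = "l / q"])
    (auto simp: aa_nonneg lessThan_Suc_atMost[symmetric])

definition hh where "hh u = hit_time n E u v" for u

lemma hh_eq: "hh u = (\<Sum>t. aa v t u)"
  unfolding hh_def hit_time_def aa_def ..

lemma hh_le: "u < n \<Longrightarrow> hh u \<le> l / q"
  unfolding hh_eq using aa_summable aa_partial by (intro suminf_le_const) auto

lemma hh_nonneg: "u < n \<Longrightarrow> hh u \<ge> 0"
  unfolding hh_eq using aa_summable aa_nonneg by (intro suminf_nonneg) auto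

lemma hh_v: "hh v = 0"
  unfolding hh_eq by (simp add: aa_v)

lemma hh_rec:
  assumes "u < n" "u \<noteq> v"
  shows "hh u = 1 + (\<Sum>y<n. trans n E u y * hh y)"
proof -
  have "(\<Sum>t. aa v (Suc t) u) = hh u - aa v 0 u"
    unfolding hh_eq by (rule suminf_split_head[OF aa_summable[OF assms(1)]])
  moreover have "(\<Sum>t. aa v (Suc t) u) = (\<Sum>t. \<Sum>y<n. trans n E u y * aa v t y)"
    using aa_Suc[OF assms] by simp
  moreover have "\<dots> = (\<Sum>y<n. \<Sum>t. trans n E u y * aa v t y)"
    by (rule suminf_sum) (auto intro: summable_mult aa_summable)
  moreover have "\<dots> = (\<Sum>y<n. trans n E u y * hh y)"
    unfolding hh_eq by (intro sum.cong refl suminf_mult aa_summable) auto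
  ultimately show ?thesis using aa_0[OF assms(1)] assms(2) by simp
qed

end


context hit begin

lemma geom2: "0 \<le> x \<Longrightarrow> x \<le> 1/2 \<Longrightarrow> (\<Sum>t<T. x^t) \<le> (2::real)"
proof -
  assume x: "0 \<le> x" "x \<le> 1/2"
  have "(\<Sum>t<T. x^t) = (1 - x^T) / (1 - x)" using x by (simp add: sum_gp_strict)
  also have "\<dots> \<le> 1 / (1 - x)" using x by (intro divide_right_mono) auto
  also have "\<dots> \<le> 2" using x by (simp add: field_simps)
  finally show ?thesis .
qed

lemma diff_bound:
  assumes w: "w < n" and w': "w' < n" and lamL: "sqrt L \<le> 1/2"
  shows "\<bar>hit_time_dist n E (walk_dist n E m w) v - hit_time_dist n E (walk_dist n E m w') v\<bar>
           \<le> (1 + l / q) * 2 * sqrt 6 * sqrt L ^ m"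
proof -
  define lam where "lam = sqrt L"
  have lam0: "0 \<le> lam" unfolding lam_def using L0 by simp
  have lam1: "lam \<le> 1/2" using lamL unfolding lam_def .
  define M where "M = l / q"
  have M0: "M \<ge> 0" unfolding M_def using q by simp
  define D where "D t u = walk_dist n E (m + t) w u - walk_dist n E (m + t) w' u" for t u
  define R where "R = (\<Sum>y<n. trans n E v y * hh y)"
  have R0: "R \<ge> 0" unfolding R_def using hh_nonneg trans_nonneg by (intro sum_nonneg) auto
  have RM: "R \<le> M"
  proof -
    have "R \<le> (\<Sum>y<n. trans n E v y * M)"
      unfolding R_def M_def using hh_le trans_nonneg by (intro sum_mono mult_left_mono) auto
    also have "\<dots> = M" using trans_sum[OF v] by (simp add: sum_distrib_right[symmetric])
    finally show ?thesis .
  qed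
  have Dsum: "(\<Sum>u<n. D t u) = 0" for t
    unfolding D_def using walk_sum w w' by (simp add: sum_subtractf)
  have Db: "\<bar>D t u\<bar> \<le> sqrt 6 * lam ^ (m + t)" if "u < n" for t u
  proof -
    have "(D t u)^2 \<le> 6 * L ^ (m + t)" unfolding D_def by (rule walk_diff[OF w w' that])
    then have "sqrt ((D t u)^2) \<le> sqrt (6 * L ^ (m + t))" by (rule real_sqrt_le_mono)
    moreover have "sqrt ((D t u)^2) = \<bar>D t u\<bar>" by (rule real_sqrt_abs)
    moreover have "sqrt (6 * L ^ (m + t)) = sqrt 6 * lam ^ (m + t)"
      unfolding lam_def by (simp only: real_sqrt_mult real_sqrt_power)
    ultimately show ?thesis by simp
  qed
  have Ph: "(\<Sum>y<n. trans n E z y * hh y) = hh z - 1 + (if z = v then 1 + R else 0)" if "z < n" for z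
  proof (cases "z = v")
    case True then show ?thesis by (simp add: R_def hh_v)
  next
    case False then show ?thesis using hh_rec[OF that False] by simp
  qed
  have DSuc: "D (Suc t) u = (\<Sum>z<n. D t z * trans n E z u)" for t u
    unfolding D_def by (simp add: sum_subtractf left_diff_distrib)
  have step: "(\<Sum>u<n. D (Suc t) u * hh u) = (\<Sum>u<n. D t u * hh u) + (1 + R) * D t v" for t
  proof -
    have "(\<Sum>u<n. D (Suc t) u * hh u) = (\<Sum>u<n. \<Sum>z<n. D t z * trans n E z u * hh u)"
      unfolding DSuc by (simp add: sum_distrib_right)
    also have "\<dots> = (\<Sum>z<n. \<Sum>u<n. D t z * trans n E z u * hh u)" by (rule sum.swap)
    also have "\<dots> = (\<Sum>z<n. D t z * (hh z - 1 + (if z = v then 1 + R else 0)))"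
    proof (intro sum.cong refl)
      fix z assume "z \<in> {..<n}"
      then have z: "z < n" by simp
      have "(\<Sum>u<n. D t z * trans n E z u * hh u) = D t z * (\<Sum>u<n. trans n E z u * hh u)"
        by (simp add: sum_distrib_left mult.assoc)
      also have "\<dots> = D t z * (hh z - 1 + (if z = v then 1 + R else 0))" using Ph[OF z] by simp
      finally show "(\<Sum>u<n. D t z * trans n E z u * hh u) = D t z * (hh z - 1 + (if z = v then 1 + R else 0))" .
    qed
    also have "\<dots> = (\<Sum>z<n. D t z * hh z - D t z + (if z = v then D t z * (1 + R) else 0))"
      by (intro sum.cong refl) (simp add: algebra_simps)
    also have "\<dots> = (\<Sum>z<n. D t z * hh z) - (\<Sum>z<n. D t z) + (\<Sum>z<n. if z = v then D t z * (1 + R) else 0)"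
      by (simp only: sum.distrib sum_subtractf)
    also have "\<dots> = (\<Sum>u<n. D t u * hh u) + (1 + R) * D t v"
      using v by (simp add: Dsum sum.delta' mult.commute)
    finally show ?thesis .
  qed
  have tele: "(\<Sum>u<n. D T u * hh u) = (\<Sum>u<n. D 0 u * hh u) + (1 + R) * (\<Sum>t<T. D t v)" for T
    by (induction T) (simp_all add: step algebra_simps)
  have X: "hit_time_dist n E (walk_dist n E m w) v - hit_time_dist n E (walk_dist n E m w') v
        = (\<Sum>u<n. D 0 u * hh u)"
    unfolding hit_time_dist_def D_def hh_def by (simp add: sum_subtractf left_diff_distrib)
  have bound: "\<bar>\<Sum>u<n. D 0 u * hh u\<bar> \<le> (1 + M) * 2 * sqrt 6 * lam ^ m + (n * sqrt 6 * M * lam ^ m) * lam ^ T" for T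
  proof -
    have A: "\<bar>\<Sum>u<n. D T u * hh u\<bar> \<le> n * sqrt 6 * M * lam ^ m * lam ^ T"
    proof -
      have "\<bar>\<Sum>u<n. D T u * hh u\<bar> \<le> (\<Sum>u<n. \<bar>D T u * hh u\<bar>)" by (rule sum_abs)
      also have "\<dots> \<le> (\<Sum>u<n. sqrt 6 * lam ^ (m + T) * M)"
      proof (intro sum_mono)
        fix u assume "u \<in> {..<n}"
        then have u: "u < n" by simp
        have "\<bar>D T u * hh u\<bar> = \<bar>D T u\<bar> * hh u" using hh_nonneg[OF u] by (simp add: abs_mult)
        also have "\<dots> \<le> sqrt 6 * lam ^ (m + T) * M"
          using Db[OF u, of T] hh_le[OF u] hh_nonneg[OF u] lam0 unfolding M_def
          by (intro mult_mono) auto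
        finally show "\<bar>D T u * hh u\<bar> \<le> sqrt 6 * lam ^ (m + T) * M" .
      qed
      also have "\<dots> = n * sqrt 6 * M * lam ^ m * lam ^ T" by (simp add: power_add)
      finally show ?thesis .
    qed
    have B: "\<bar>\<Sum>t<T. D t v\<bar> \<le> 2 * sqrt 6 * lam ^ m"
    proof -
      have "\<bar>\<Sum>t<T. D t v\<bar> \<le> (\<Sum>t<T. \<bar>D t v\<bar>)" by (rule sum_abs)
      also have "\<dots> \<le> (\<Sum>t<T. sqrt 6 * lam ^ m * lam ^ t)"
        using Db[OF v] by (intro sum_mono) (simp add: power_add mult.assoc)
      also have "\<dots> = sqrt 6 * lam ^ m * (\<Sum>t<T. lam ^ t)" by (simp add: sum_distrib_left)
      also have "\<dots> \<le> sqrt 6 * lam ^ m * 2" using geom2[OF lam0 lam1] lam0 by (intro mult_left_mono) auto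
      finally show ?thesis by simp
    qed
    have "(\<Sum>u<n. D 0 u * hh u) = (\<Sum>u<n. D T u * hh u) - (1 + R) * (\<Sum>t<T. D t v)"
      using tele[of T] by simp
    then have "\<bar>\<Sum>u<n. D 0 u * hh u\<bar> \<le> \<bar>\<Sum>u<n. D T u * hh u\<bar> + (1 + R) * \<bar>\<Sum>t<T. D t v\<bar>"
    proof -
      have "\<bar>(1 + R) * (\<Sum>t<T. D t v)\<bar> = (1 + R) * \<bar>\<Sum>t<T. D t v\<bar>" using R0 by (simp add: abs_mult)
      then show ?thesis using \<open>(\<Sum>u<n. D 0 u * hh u) = (\<Sum>u<n. D T u * hh u) - (1 + R) * (\<Sum>t<T. D t v)\<close>
        abs_triangle_ineq4[of "\<Sum>u<n. D T u * hh u" "(1 + R) * (\<Sum>t<T. D t v)"] by linarith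
    qed
    moreover have "(1 + R) * \<bar>\<Sum>t<T. D t v\<bar> \<le> (1 + M) * (2 * sqrt 6 * lam ^ m)"
      using B RM R0 by (intro mult_mono) auto
    ultimately have "\<bar>\<Sum>u<n. D 0 u * hh u\<bar> \<le> \<bar>\<Sum>u<n. D T u * hh u\<bar> + (1 + M) * (2 * sqrt 6 * lam ^ m)" by linarith
    then show ?thesis using A by (simp only: mult.assoc)
  qed
  have "\<bar>\<Sum>u<n. D 0 u * hh u\<bar> \<le> (1 + M) * 2 * sqrt 6 * lam ^ m"
    by (rule le_of_limit[OF bound lam0]) (use lam1 in simp)
  then show ?thesis unfolding X M_def lam_def .
qed

end


lemma sq_le: "0 \<le> c \<Longrightarrow> 0 \<le> x \<Longrightarrow> 0 \<le> y \<Longrightarrow> c^2 * x \<le> y^2 \<Longrightarrow> c * sqrt x \<le> (y::real)"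
proof -
  assume h: "0 \<le> c" "0 \<le> x" "0 \<le> y" "c^2 * x \<le> y^2"
  have "c * sqrt x = sqrt (c^2 * x)" using h by (simp add: real_sqrt_mult)
  also have "\<dots> \<le> sqrt (y^2)" using h by (intro real_sqrt_le_mono) auto
  also have "\<dots> = y" using h by simp
  finally show ?thesis .
qed

lemma graph_bound:
  fixes a C0 p eta :: real and n l k :: nat
  assumes cls: "in_class k n p C0 eta E" and C0: "C0 > 0" and a: "a = p * n"
    and lnn: "ln n \<ge> 1" and big: "32 * C0^2 * ln n \<le> a"
    and l: "l > 0" and small: "216 * (real n)^2 * (8 * C0^2 / a)^l \<le> 1"
    and v: "v < n" and w: "w < n" and w': "w' < n"
  shows "\<bar>hit_time_dist n E (walk_dist n E l w) v - hit_time_dist n E (walk_dist n E l w') v\<bar>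
           \<le> (1 + 6 * n * l) * 2 * sqrt 6 * sqrt (8 * C0^2 / a) ^ l"
proof -
  have cpos: "32 * C0^2 > 0" using C0 by simp
  have big1': "32 * C0^2 * 1 \<le> 32 * C0^2 * ln n" using lnn cpos by (intro mult_left_mono) auto
  have big1: "32 * C0^2 \<le> a" using big1' big by linarith
  have apos: "a > 0" using big1 cpos by linarith
  have sg: "simple_graph n E" using cls unfolding in_class_def by (elim conjE)
  have degb: "\<forall>v<n. \<bar>real (deg n E v) - p * n\<bar> \<le> C0 * sqrt (p * n * ln n)"
    using cls unfolding in_class_def by (elim conjE)
  obtain lam phi where sd: "spectral_decomp n E lam phi"
    and lamb: "max \<bar>lam 1\<bar> \<bar>lam (n - 1)\<bar> \<le> C0 * sqrt (p * n)"
    using cls unfolding in_class_def by (elim conjE exE)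
  interpret spec n E lam phi using sg sd by unfold_locales
  define s where "s = C0 * sqrt a"
  have s0: "s \<ge> 0" unfolding s_def using C0 apos by simp
  have ord: "\<forall>j j'. j \<le> j' \<and> j' < n \<longrightarrow> lam j' \<le> lam j" using sd unfolding spectral_decomp_def by blast
  have lamj: "\<forall>j. 1 \<le> j \<and> j < n \<longrightarrow> \<bar>lam j\<bar> \<le> s"
  proof (intro allI impI)
    fix j assume j: "1 \<le> j \<and> j < n"
    then have "lam j \<le> lam 1" "lam (n - 1) \<le> lam j" using ord by auto
    moreover have "\<bar>lam 1\<bar> \<le> s" "\<bar>lam (n - 1)\<bar> \<le> s" using lamb unfolding s_def a by auto
    ultimately show "\<bar>lam j\<bar> \<le> s" by (simp add: abs_le_iff)
  qed
  have sa: "2 * s \<le> a" unfolding s_def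
  proof -
    have "(2 * C0)^2 * a \<le> a^2" using big1 apos by (simp add: power2_eq_square field_simps)
    then have "(2 * C0) * sqrt a \<le> a" using C0 apos by (intro sq_le) auto
    then show "2 * (C0 * sqrt a) \<le> a" by simp
  qed
  define e2 where "e2 = C0^2 * (a * ln n)"
  have dv: "\<bar>real (deg n E u) - a\<bar> \<le> C0 * sqrt (a * ln n)" if "u < n" for u
    using degb that unfolding a by auto
  have dev: "(\<Sum>i<n. (real (deg n E i) - a)^2) \<le> n * e2"
  proof -
    have "(\<Sum>i<n. (real (deg n E i) - a)^2) \<le> (\<Sum>i<n. e2)"
    proof (intro sum_mono)
      fix i assume "i \<in> {..<n}"
      then have "\<bar>real (deg n E i) - a\<bar> \<le> C0 * sqrt (a * ln n)" using dv by auto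
      then have "\<bar>real (deg n E i) - a\<bar>^2 \<le> (C0 * sqrt (a * ln n))^2" by (intro power_mono) auto
      also have "\<dots> = e2" unfolding e2_def using apos lnn by (simp add: power_mult_distrib)
      finally show "(real (deg n E i) - a)^2 \<le> e2" by simp
    qed
    then show ?thesis by simp
  qed
  have e2: "8 * e2 \<le> a^2" unfolding e2_def using big apos C0 by (simp add: power2_eq_square field_simps)
  have hd: "C0 * sqrt (a * ln n) \<le> a / 2"
  proof (rule sq_le)
    show "C0^2 * (a * ln n) \<le> (a/2)^2" using big apos C0 by (simp add: power2_eq_square field_simps)
  qed (use C0 apos lnn in auto)
  have dlo: "\<forall>v<n. a / 2 \<le> real (deg n E v)"
  proof (intro allI impI)
    fix v assume "v < n"
    then show "a / 2 \<le> real (deg n E v)" using dv[of v] hd by (simp add: abs_le_iff)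
  qed
  have dhi: "\<forall>v<n. real (deg n E v) \<le> 3 * a / 2"
  proof (intro allI impI)
    fix v assume "v < n"
    then show "real (deg n E v) \<le> 3 * a / 2" using dv[of v] hd by (simp add: abs_le_iff)
  qed
  define L where "L = 8 * C0^2 / a"
  have L0: "L \<ge> 0" unfolding L_def using apos by simp
  have sL: "8 * s^2 / a^2 = L" unfolding s_def L_def using apos by (simp add: power2_eq_square power_mult_distrib field_simps)
  have contr: "\<forall>f. (\<Sum>u<n. f u) = 0 \<longrightarrow> QF n E (stp n E f) \<le> L * QF n E f"
    using contraction[OF apos s0 lamj sa dev e2 dlo] sL by auto
  interpret gr n E a L using sg apos dlo dhi L0 contr by unfold_locales
  define q where "q = 1 / (6 * real n)"
  have n0: "n > 0" using v by simp
  have q: "0 < q" "q \<le> 1" unfolding q_def using n0 by auto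
  have walk_lo: "\<forall>y<n. q \<le> walk_dist n E l y v"
  proof (intro allI impI)
    fix y assume y: "y < n"
    have "(walk_dist n E l y v - pi v)^2 \<le> 6 * L^l" by (rule walk_pi[OF y v])
    also have "\<dots> \<le> (1 / (6 * n))^2"
    proof -
      have "216 * (real n)^2 * L^l \<le> 1" using small unfolding L_def .
      then show ?thesis using n0 by (simp add: power2_eq_square field_simps)
    qed
    finally have "\<bar>walk_dist n E l y v - pi v\<bar> \<le> 1 / (6 * n)"
      using abs_le_square_iff[of "walk_dist n E l y v - pi v" "1 / (6 * real n)"] n0 by simp
    moreover have "pi v \<ge> 1 / (3 * n)" by (rule pi_lo[OF v])
    moreover have "1 / (3 * real n) = 2 * (1 / (6 * n))" by simp
    ultimately show "q \<le> walk_dist n E l y v" unfolding q_def by linarith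
  qed
  interpret hit n E a L v l q using v l q walk_lo by unfold_locales
  have lamL: "sqrt L \<le> 1/2"
  proof -
    have "L \<le> (1/2)^2" unfolding L_def using big1 apos by (simp add: field_simps power2_eq_square)
    then have "sqrt L \<le> sqrt ((1/2)^2)" by (rule real_sqrt_le_mono)
    then show ?thesis by simp
  qed
  have "l / q = 6 * n * l" unfolding q_def by simp
  then show ?thesis using diff_bound[OF w w' lamL, of l] unfolding L_def by simp
qed


theorem lemma4p1:
  fixes k l :: nat and p :: "nat \<Rightarrow> real" and c C0 :: real and eta :: "nat \<Rightarrow> real"
  assumes "k \<ge> 2" and "l \<ge> 3 * k + 2"
    and "c > 0"
    and "eventually (\<lambda>n. ln n / real n powr ((real k - 1) / real k) \<le> p n
                        \<and> p n \<le> 1 - c * (ln n)^4 / n) sequentially"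
    and "C0 > 0"
    and "eta \<longlonglongrightarrow> 0"
  shows "\<exists>C N. \<forall>n \<ge> N. \<forall>E. in_class k n (p n) C0 (eta n) E \<longrightarrow>
           (\<forall>v<n. \<forall>w<n. \<forall>w'<n.
              \<bar>hit_time_dist n E (walk_dist n E l w) v - hit_time_dist n E (walk_dist n E l w') v\<bar>
                \<le> C * (sqrt (ln n) / sqrt (p n * n)))"
proof -
  note k = assms(1) and lk = assms(2) and cpos = assms(3) and C0 = assms(5)
  obtain N0 where H: "\<And>n. n \<ge> N0 \<Longrightarrow> ln n / real n powr ((real k - 1) / real k) \<le> p n
                        \<and> p n \<le> 1 - c * (ln n)^4 / n"
    using assms(4) unfolding eventually_sequentially by blast
  define K8 where "K8 = 8 * C0^2"
  define C2 where "C2 = K8 ^ l"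
  define B where "B = max 1 (32 * C0^2)"
  define N where "N = max N0 (max 3 (max (nat \<lceil>B ^ k\<rceil>) (nat \<lceil>216 * C2\<rceil>)))"
  define C where "C = 14 * sqrt 6 * l * sqrt C2"
  have K8: "K8 > 0" unfolding K8_def using C0 by simp
  have C2: "C2 > 0" unfolding C2_def using K8 by simp
  have B1: "B \<ge> 1" "B \<ge> 32 * C0^2" unfolding B_def by auto
  have l0: "l > 0" using lk by simp
  have k0: "k > 0" using k by simp
  show ?thesis
  proof (intro exI allI impI)
    fix n E v w w'
    assume nN: "N \<le> n" and cls: "in_class k n (p n) C0 (eta n) E"
      and v: "v < n" and w: "w < n" and w': "w' < n"
    have n3: "real n \<ge> 3" using nN unfolding N_def by auto
    have npos: "real n > 0" using n3 by simp
    have lnn: "ln (real n) \<ge> 1"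
    proof -
      have "ln (exp 1) \<le> ln (real n)" using exp_le n3 by (subst ln_le_cancel_iff) auto
      then show ?thesis by simp
    qed
    have nB: "real n \<ge> B ^ k"
    proof -
      have "nat \<lceil>B ^ k\<rceil> \<le> n" using nN unfolding N_def by auto
      then have "real (nat \<lceil>B ^ k\<rceil>) \<le> real n" by linarith
      moreover have "B ^ k \<le> real (nat \<lceil>B ^ k\<rceil>)" by linarith
      ultimately show ?thesis by linarith
    qed
    have nC2: "real n \<ge> 216 * C2"
    proof -
      have "nat \<lceil>216 * C2\<rceil> \<le> n" using nN unfolding N_def by auto
      then have "real (nat \<lceil>216 * C2\<rceil>) \<le> real n" by linarith
      moreover have "216 * C2 \<le> real (nat \<lceil>216 * C2\<rceil>)" by linarith
      ultimately show ?thesis by linarith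
    qed
    have Hn: "ln n / real n powr ((real k - 1) / real k) \<le> p n" "p n \<le> 1 - c * (ln n)^4 / n"
      using H[of n] nN unfolding N_def by auto
    define r where "r = real n powr (1 / real k)"
    have rpos: "r > 0" unfolding r_def using npos by simp
    have rk: "r ^ k = real n"
      unfolding r_def using npos k0 by (simp add: powr_power)
    have rB: "r \<ge> B"
    proof -
      have "B = (B ^ k) powr (1 / real k)"
        using B1 k0 by (simp add: powr_realpow[symmetric] powr_powr)
      also have "\<dots> \<le> real n powr (1 / real k)" using nB B1 by (intro powr_mono2) auto
      finally show ?thesis unfolding r_def .
    qed
    have r1: "r \<ge> 1" using rB B1 by linarith
    define a where "a = p n * n"
    have ar: "a \<ge> ln n * r"
    proof -
      have pp: "real n powr ((real k - 1) / real k) > 0" using npos by simp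
      have "ln n \<le> p n * real n powr ((real k - 1) / real k)"
        using Hn(1) pp by (simp add: divide_le_eq)
      then have "ln n * r \<le> p n * real n powr ((real k - 1) / real k) * r"
        using rpos by (intro mult_right_mono) auto
      also have "\<dots> = p n * (real n powr ((real k - 1) / real k + 1 / real k))"
        unfolding r_def by (simp add: powr_add mult.assoc)
      also have "(real k - 1) / real k + 1 / real k = 1" using k0 by (simp add: field_simps)
      finally show ?thesis unfolding a_def using npos by simp
    qed
    have p1: "p n \<le> 1"
    proof -
      have "c * (ln n)^4 / n \<ge> 0" using cpos lnn npos by simp
      then show ?thesis using Hn(2) by linarith
    qed
    have an: "a \<le> n" unfolding a_def using p1 npos by (simp add: mult_left_le_one_le mult.commute)
    have a_ge_r: "a \<ge> r"
    proof -
      have "r \<le> ln n * r" using lnn rpos by (simp add: mult_le_cancel_right1)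
      then show ?thesis using ar by linarith
    qed
    have apos: "a > 0" using a_ge_r rpos by linarith
    have big: "32 * C0^2 * ln n \<le> a"
    proof -
      have "32 * C0^2 * ln n \<le> r * ln n" using rB B1 lnn by (intro mult_right_mono) auto
      then show ?thesis using ar by (simp add: mult.commute)
    qed
    have Lpow: "(K8 / a) ^ l \<le> C2 / (real n)^3"
    proof -
      have "(K8 / a) ^ l \<le> (K8 / r) ^ l"
        using K8 apos rpos a_ge_r by (intro power_mono divide_left_mono) auto
      also have "\<dots> = C2 / r ^ l" unfolding C2_def by (simp add: power_divide)
      also have "\<dots> \<le> C2 / r ^ (3 * k)"
      proof -
        have "r ^ (3 * k) \<le> r ^ l" using r1 lk by (intro power_increasing) auto
        then show ?thesis using C2 rpos by (intro divide_left_mono) auto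
      qed
      also have "r ^ (3 * k) = (real n)^3" by (simp add: power_mult[symmetric] rk mult.commute power_mult)
      finally show ?thesis .
    qed
    have small: "216 * (real n)^2 * (8 * C0^2 / a)^l \<le> 1"
    proof -
      have "216 * (real n)^2 * (K8 / a)^l \<le> 216 * (real n)^2 * (C2 / (real n)^3)"
        using Lpow by (intro mult_left_mono) auto
      also have "\<dots> = 216 * C2 / real n" using npos by (simp add: power2_eq_square power3_eq_cube)
      also have "\<dots> \<le> 1" using nC2 npos by simp
      finally show ?thesis unfolding K8_def .
    qed
    have GB: "\<bar>hit_time_dist n E (walk_dist n E l w) v - hit_time_dist n E (walk_dist n E l w') v\<bar>
           \<le> (1 + 6 * n * l) * 2 * sqrt 6 * sqrt (8 * C0^2 / a) ^ l"
      by (rule graph_bound[OF cls C0 a_def lnn big l0 small v w w'])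
    have S1: "sqrt (8 * C0^2 / a) ^ l \<le> sqrt C2 / (real n * sqrt n)"
    proof -
      have "sqrt (8 * C0^2 / a) ^ l = sqrt ((K8 / a) ^ l)" unfolding K8_def by (simp add: real_sqrt_power)
      also have "\<dots> \<le> sqrt (C2 / (real n)^3)" using Lpow by (rule real_sqrt_le_mono)
      also have "\<dots> = sqrt C2 / (real n * sqrt n)"
        using npos by (simp add: real_sqrt_divide power3_eq_cube real_sqrt_mult)
      finally show ?thesis .
    qed
    have S2: "(1 + 6 * real n * l) \<le> 7 * real n * l"
    proof -
      have "real l \<ge> 1" using l0 by simp
      then have "1 * 1 \<le> real n * real l" using n3 by (intro mult_mono) auto
      then show ?thesis by linarith
    qed
    have "(1 + 6 * n * l) * 2 * sqrt 6 * sqrt (8 * C0^2 / a) ^ l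
        \<le> (7 * real n * l) * 2 * sqrt 6 * (sqrt C2 / (real n * sqrt n))"
      using S1 S2 apos by (intro mult_mono) auto
    also have "\<dots> = C / sqrt n" unfolding C_def using npos by (simp add: field_simps)
    also have "\<dots> \<le> C * (sqrt (ln n) / sqrt (p n * n))"
    proof -
      have C0': "C \<ge> 0" unfolding C_def using C2 by simp
      have "sqrt a \<le> sqrt n * sqrt (ln n)"
      proof -
        have "real n * 1 \<le> real n * ln n" using lnn npos by (intro mult_left_mono) auto
        then have "a \<le> n * ln n" using an by linarith
        then show ?thesis by (metis real_sqrt_le_mono real_sqrt_mult)
      qed
      then have "1 / sqrt n \<le> sqrt (ln n) / sqrt a"
        using apos npos by (simp add: field_simps)
      then show ?thesis using C0' unfolding a_def by (simp add: divide_inverse mult_left_mono)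
    qed
    finally show "\<bar>hit_time_dist n E (walk_dist n E l w) v - hit_time_dist n E (walk_dist n E l w') v\<bar>
                \<le> C * (sqrt (ln n) / sqrt (p n * n))" using GB by linarith
  qed
qed

end
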